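(* Let $S$ be the surface of revolution $\boldsymbol{x}(u,v)=(p(u)\cos v,\,p(u)\sin v,\,q(u))$ with nowhere vanishing Gaussian curvature, and suppose $\Delta^{II}\boldsymbol{x}=A\boldsymbol{x}$ for a real $3\times3$ matrix $A=(a_{ij})$. Then $A=\mathrm{diag}(\lambda,\lambda,\mu)$ for some real numbers $\lambda,\mu$, i.e. $a_{12}=a_{13}=a_{21}=a_{23}=a_{31}=a_{32}=0$ and $a_{11}=a_{22}$. Moreover $\lambda$ and $\mu$ are not both zero, i.e. there is no such surface with $\Delta^{II}\boldsymbol{x}=0$.
   Context: Here $p,q$ are smooth on an interval $(a,b)$, $p>0$, $(p')^{2}+(q')^{2}=1$, $v\in[0,2\pi)$. Let $\boldsymbol{n}$ be the unit normal $\frac{\boldsymbol{x}_{u}\times\boldsymbol{x}_{v}}{\|\boldsymbol{x}_{u}\times\boldsymbol{x}_{v}\|}$ and $II=b_{ij}du^{i}du^{j}$ the second fundamental form, $b_{ij}=\langle \boldsymbol{x}_{u^iu^j},\boldsymbol{n}\rangle$, $(u^1,u^2)=(u,v)$; nonvanishing Gaussian curvature makes $(b_{ij})$ invertible with inverse $(b^{ij})$, and $b=\det(b_{ij})$. For smooth $f$, $\Delta^{II}f=-\frac{1}{\sqrt{|b|}}\partial_{u^{i}}\big(\sqrt{|b|}\,b^{ij}\partial_{u^{j}}f\big)$, and $\Delta^{II}\boldsymbol{x}$ is applied componentwise to the coordinate functions $(x_1,x_2,x_3)$ of $\boldsymbol{x}$. *)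

theory Defs
  imports "HOL-Analysis.Analysis"
begin

definition pd :: "nat \<Rightarrow> (real \<times> real \<Rightarrow> 'a::real_normed_vector) \<Rightarrow> real \<times> real \<Rightarrow> 'a" where
  "pd i f w = (if i = 1 then vector_derivative (\<lambda>t. f (t, snd w)) (at (fst w))
               else vector_derivative (\<lambda>t. f (fst w, t)) (at (snd w)))"

definition unit_normal :: "(real \<times> real \<Rightarrow> real^3) \<Rightarrow> real \<times> real \<Rightarrow> real^3" where
  "unit_normal X w = (let c = cross3 (pd 1 X w) (pd 2 X w) in (1 / norm c) *\<^sub>R c)"

definition gff :: "(real \<times> real \<Rightarrow> real^3) \<Rightarrow> nat \<Rightarrow> nat \<Rightarrow> real \<times> real \<Rightarrow> real" where
  "gff X i j w = pd i X w \<bullet> pd j X w"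

definition sff :: "(real \<times> real \<Rightarrow> real^3) \<Rightarrow> nat \<Rightarrow> nat \<Rightarrow> real \<times> real \<Rightarrow> real" where
  "sff X i j w = pd i (pd j X) w \<bullet> unit_normal X w"

definition det_sff :: "(real \<times> real \<Rightarrow> real^3) \<Rightarrow> real \<times> real \<Rightarrow> real" where
  "det_sff X w = sff X 1 1 w * sff X 2 2 w - sff X 1 2 w * sff X 2 1 w"

definition det_gff :: "(real \<times> real \<Rightarrow> real^3) \<Rightarrow> real \<times> real \<Rightarrow> real" where
  "det_gff X w = gff X 1 1 w * gff X 2 2 w - gff X 1 2 w * gff X 2 1 w"

definition gauss_curvature :: "(real \<times> real \<Rightarrow> real^3) \<Rightarrow> real \<times> real \<Rightarrow> real" where
  "gauss_curvature X w = det_sff X w / det_gff X w"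

definition sff_inv :: "(real \<times> real \<Rightarrow> real^3) \<Rightarrow> nat \<Rightarrow> nat \<Rightarrow> real \<times> real \<Rightarrow> real" where
  "sff_inv X i j w =
     (if i = 1 \<and> j = 1 then sff X 2 2 w
      else if i = 2 \<and> j = 2 then sff X 1 1 w
      else - sff X i j w) / det_sff X w"

definition lap_II :: "(real \<times> real \<Rightarrow> real^3) \<Rightarrow> (real \<times> real \<Rightarrow> real) \<Rightarrow> real \<times> real \<Rightarrow> real" where
  "lap_II X f w = - (1 / sqrt \<bar>det_sff X w\<bar>) *
     (\<Sum>i\<in>{1,2}. pd i (\<lambda>z. sqrt \<bar>det_sff X z\<bar> * (\<Sum>j\<in>{1,2}. sff_inv X i j z * pd j f z)) w)"

definition lap_II_vec :: "(real \<times> real \<Rightarrow> real^3) \<Rightarrow> real \<times> real \<Rightarrow> real^3" where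
  "lap_II_vec X w = (\<chi> k. lap_II X (\<lambda>z. X z $ k) w)"

definition surf_rev :: "(real \<Rightarrow> real) \<Rightarrow> (real \<Rightarrow> real) \<Rightarrow> real \<times> real \<Rightarrow> real^3" where
  "surf_rev p q w = vector [p (fst w) * cos (snd w), p (fst w) * sin (snd w), q (fst w)]"

definition smooth_on_interval :: "(real \<Rightarrow> real) \<Rightarrow> real set \<Rightarrow> bool" where
  "smooth_on_interval f S \<longleftrightarrow> (\<forall>k. \<forall>t\<in>S. ((deriv ^^ k) f) differentiable (at t))"

end

theory Submission imports Defs begin


lemma vec3_eq: "(vector [x,y,z] :: real^3) = x *\<^sub>R vector [1,0,0] + y *\<^sub>R vector [0,1,0] + z *\<^sub>R vector[0,0,1]"
  by (simp add: vec_eq_iff forall_3)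

lemma vec3_deriv:
  assumes "(f1 has_real_derivative d1) (at t)" "(f2 has_real_derivative d2) (at t)"
    "(f3 has_real_derivative d3) (at t)"
  shows "((\<lambda>t. vector [f1 t, f2 t, f3 t] :: real^3) has_vector_derivative vector [d1,d2,d3]) (at t)"
proof -
  have "((\<lambda>t. f1 t *\<^sub>R vector [1,0,0] + f2 t *\<^sub>R vector [0,1,0] + f3 t *\<^sub>R vector[0,0,1] :: real^3)
     has_vector_derivative (d1 *\<^sub>R vector [1,0,0] + d2 *\<^sub>R vector [0,1,0] + d3 *\<^sub>R vector[0,0,1])) (at t)"
    by (rule derivative_eq_intros assms has_vector_derivative_const refl)+ simp
  then show ?thesis by (simp only: vec3_eq[symmetric])
qed

lemma pd1_eq:
  assumes "open S" "fst w \<in> S" "\<And>t. t \<in> S \<Longrightarrow> f (t, snd w) = g t"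
    "(g has_vector_derivative g') (at (fst w))"
  shows "pd 1 f w = g'"
  unfolding pd_def
  using has_vector_derivative_transform_within_open[OF assms(4,1,2), of "\<lambda>t. f (t, snd w)"] assms(3)
  by (simp add: vector_derivative_at)

lemma pd2_eq:
  assumes "\<And>t. f (fst w, t) = g t" "(g has_vector_derivative g') (at (snd w))"
  shows "pd 2 f w = g'"
  unfolding pd_def using assms by (simp add: vector_derivative_at)



lemma pd1_eq_r:
  assumes "open S" "fst w \<in> S" "\<And>t. t \<in> S \<Longrightarrow> f (t, snd w) = g t"
    "(g has_real_derivative g') (at (fst w))"
  shows "pd 1 f w = (g'::real)"
  using pd1_eq[of S w f g, OF assms(1-3)] assms(4) by (simp add: has_real_derivative_iff_has_vector_derivative)

lemma pd2_eq_r: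
  assumes "\<And>t. f (fst w, t) = g t" "(g has_real_derivative g') (at (snd w))"
  shows "pd 2 f w = (g'::real)"
  using pd2_eq[of f w g, OF assms(1)] assms(2) by (simp add: has_real_derivative_iff_has_vector_derivative)

lemma lap_II_eq: "lap_II X f w = -(1/sqrt\<bar>det_sff X w\<bar>) *
   (pd 1 (\<lambda>z. sqrt\<bar>det_sff X z\<bar> * (sff_inv X 1 1 z * pd 1 f z + sff_inv X 1 2 z * pd 2 f z)) w
  + pd 2 (\<lambda>z. sqrt\<bar>det_sff X z\<bar> * (sff_inv X 2 1 z * pd 1 f z + sff_inv X 2 2 z * pd 2 f z)) w)"
  by (simp add: lap_II_def)

locale rev =
  fixes p q :: "real \<Rightarrow> real" and I :: "real set"
  assumes openI: "open I"
    and dp: "\<And>t. t \<in> I \<Longrightarrow> (p has_real_derivative deriv p t) (at t)"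
    and ddp: "\<And>t. t \<in> I \<Longrightarrow> (deriv p has_real_derivative deriv (deriv p) t) (at t)"
    and dddp: "\<And>t. t \<in> I \<Longrightarrow> (deriv (deriv p) has_real_derivative deriv (deriv (deriv p)) t) (at t)"
    and dq: "\<And>t. t \<in> I \<Longrightarrow> (q has_real_derivative deriv q t) (at t)"
    and ddq: "\<And>t. t \<in> I \<Longrightarrow> (deriv q has_real_derivative deriv (deriv q) t) (at t)"
    and dddq: "\<And>t. t \<in> I \<Longrightarrow> (deriv (deriv q) has_real_derivative deriv (deriv (deriv q)) t) (at t)"
    and pos: "\<And>t. t \<in> I \<Longrightarrow> p t > 0"
    and unit: "\<And>t. t \<in> I \<Longrightarrow> (deriv p t)\<^sup>2 + (deriv q t)\<^sup>2 = 1"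
begin

lemma cs1[simp]: "cos v * (cos v * x) + sin v * (sin v * x) = (x::real)"
proof -
  have "cos v * (cos v * x) + sin v * (sin v * x) = x * (cos v * cos v + sin v * sin v)"
    by algebra
  then show ?thesis by (simp only: sin_cos_squared_add3 mult_1_right)
qed

abbreviation "X \<equiv> surf_rev p q"
abbreviation "P1 \<equiv> deriv p"
abbreviation "P2 \<equiv> deriv (deriv p)"
abbreviation "Q1 \<equiv> deriv q"
abbreviation "Q2 \<equiv> deriv (deriv q)"

lemma X_eq: "X (u,v) = vector [p u * cos v, p u * sin v, q u]"
  by (simp add: surf_rev_def)

lemma pd1X: "u \<in> I \<Longrightarrow> pd 1 X (u,v) = vector [P1 u * cos v, P1 u * sin v, Q1 u]"
  apply (rule pd1_eq[OF openI, where g="\<lambda>t. vector [p t * cos v, p t * sin v, q t]"])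
    apply (simp_all add: X_eq)
  by (intro vec3_deriv) (auto intro!: derivative_eq_intros dp dq)
lemmas pd1X' = pd1X[unfolded One_nat_def]

lemma pd2X: "pd 2 X (u,v) = vector [- p u * sin v, p u * cos v, 0]"
  apply (rule pd2_eq[where g="\<lambda>t. vector [p u * cos t, p u * sin t, q u]"])
   apply (simp_all add: X_eq)
  by (intro vec3_deriv) (auto intro!: derivative_eq_intros)

lemma pd11X: "u \<in> I \<Longrightarrow> pd 1 (pd 1 X) (u,v) = vector [P2 u * cos v, P2 u * sin v, Q2 u]"
  apply (rule pd1_eq[OF openI, where g="\<lambda>t. vector [P1 t * cos v, P1 t * sin v, Q1 t]"])
    apply (simp_all add: pd1X')
  by (intro vec3_deriv) (auto intro!: derivative_eq_intros ddp ddq)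
lemmas pd11X' = pd11X[unfolded One_nat_def]

lemma pd12X: "u \<in> I \<Longrightarrow> pd 1 (pd 2 X) (u,v) = vector [- P1 u * sin v, P1 u * cos v, 0]"
  apply (rule pd1_eq[OF openI, where g="\<lambda>t. vector [- p t * sin v, p t * cos v, 0]"])
    apply (simp_all add: pd2X)
  by (intro vec3_deriv) (auto intro!: derivative_eq_intros dp)
lemmas pd12X' = pd12X[unfolded One_nat_def]

lemma pd21X: "u \<in> I \<Longrightarrow> pd 2 (pd 1 X) (u,v) = vector [- P1 u * sin v, P1 u * cos v, 0]"
  apply (rule pd2_eq[where g="\<lambda>t. vector [P1 u * cos t, P1 u * sin t, Q1 u]"])
   apply (simp_all add: pd1X')
  by (intro vec3_deriv) (auto intro!: derivative_eq_intros)
lemmas pd21X' = pd21X[unfolded One_nat_def]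

lemma pd22X: "pd 2 (pd 2 X) (u,v) = vector [- p u * cos v, - p u * sin v, 0]"
  apply (rule pd2_eq[where g="\<lambda>t. vector [- p u * sin t, p u * cos t, 0]"])
   apply (simp_all add: pd2X)
  by (intro vec3_deriv) (auto intro!: derivative_eq_intros)

lemma normal: "u \<in> I \<Longrightarrow> unit_normal X (u,v) = vector [- Q1 u * cos v, - Q1 u * sin v, P1 u]"
proof -
  assume u: "u \<in> I"
  have c: "cross3 (pd 1 X (u,v)) (pd 2 X (u,v)) = p u *\<^sub>R vector [- Q1 u * cos v, - Q1 u * sin v, P1 u]"
    by (simp add: pd1X' pd2X u cross3_def vec_eq_iff forall_3 algebra_simps)
  have n: "norm (vector [- Q1 u * cos v, - Q1 u * sin v, P1 u] :: real^3) = 1"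
  proof -
    have "(vector [- Q1 u * cos v, - Q1 u * sin v, P1 u] :: real^3) \<bullet> vector [- Q1 u * cos v, - Q1 u * sin v, P1 u]
        = (Q1 u)^2 * ((sin v)^2 + (cos v)^2) + (P1 u)^2"
      by (simp add: inner_vec_def sum_3 power2_eq_square algebra_simps)
    also have "\<dots> = 1" using unit[OF u] by simp
    finally show ?thesis by (simp add: norm_eq_sqrt_inner)
  qed
  show ?thesis unfolding unit_normal_def Let_def c using pos[OF u] n by simp
qed

definition "k t = P1 t * Q2 t - P2 t * Q1 t"
definition "D t = k t * (p t * Q1 t)"

lemma sff11: "u \<in> I \<Longrightarrow> sff X 1 1 (u,v) = k u"
proof -
  assume u: "u \<in> I"
  have e: "(sin v)\<^sup>2 + (cos v)\<^sup>2 = 1" by simp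
  have "sff X 1 1 (u,v) = - P2 u * Q1 u * ((sin v)\<^sup>2 + (cos v)\<^sup>2) + P1 u * Q2 u"
    by (simp add: sff_def pd11X'[OF u] normal[OF u] inner_vec_def sum_3 power2_eq_square algebra_simps)
  then show ?thesis unfolding e k_def by simp
qed

lemmas normal' = normal

lemma sff12: "u \<in> I \<Longrightarrow> sff X 1 2 (u,v) = 0"
  by (simp add: sff_def pd12X' normal inner_vec_def sum_3 algebra_simps)
lemma sff21: "u \<in> I \<Longrightarrow> sff X 2 1 (u,v) = 0"
  by (simp add: sff_def pd21X' normal inner_vec_def sum_3 algebra_simps)
lemma sff22: "u \<in> I \<Longrightarrow> sff X 2 2 (u,v) = p u * Q1 u"
proof -
  assume u: "u \<in> I"
  have e: "(sin v)\<^sup>2 + (cos v)\<^sup>2 = 1" by simp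
  have "sff X 2 2 (u,v) = p u * Q1 u * ((sin v)\<^sup>2 + (cos v)\<^sup>2)"
    by (simp add: sff_def pd22X normal[OF u] inner_vec_def sum_3 power2_eq_square algebra_simps)
  then show ?thesis unfolding e by simp
qed

lemmas sffs = sff11[unfolded One_nat_def] sff12[unfolded One_nat_def] sff21[unfolded One_nat_def] sff22

lemma detsff: "u \<in> I \<Longrightarrow> det_sff X (u,v) = D u"
  by (simp add: det_sff_def sffs D_def)


definition "s t = sqrt \<bar>D t\<bar>"

context
  assumes nz: "\<And>t. t \<in> I \<Longrightarrow> D t \<noteq> 0"
begin

lemma nz': "t \<in> I \<Longrightarrow> k t \<noteq> 0 \<and> p t \<noteq> 0 \<and> Q1 t \<noteq> 0"
  using nz[of t] by (auto simp: D_def)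

lemma s_pos: "t \<in> I \<Longrightarrow> s t > 0"
  using nz[of t] by (simp add: s_def)

lemma inv11: "t \<in> I \<Longrightarrow> sff_inv X 1 1 (t,v) = 1 / k t"
  using nz'[of t] by (simp add: sff_inv_def detsff sffs sff11 sff12 sff21 sff22 D_def del: One_nat_def)
lemma inv12: "t \<in> I \<Longrightarrow> sff_inv X 1 2 (t,v) = 0"
  by (simp add: sff_inv_def detsff sffs sff11 sff12 sff21 sff22 del: One_nat_def)
lemma inv21: "t \<in> I \<Longrightarrow> sff_inv X 2 1 (t,v) = 0"
  by (simp add: sff_inv_def detsff sffs sff11 sff12 sff21 sff22 del: One_nat_def)
lemma inv22: "t \<in> I \<Longrightarrow> sff_inv X 2 2 (t,v) = 1 / (p t * Q1 t)"
  using nz'[of t] by (simp add: sff_inv_def detsff sffs sff11 sff12 sff21 sff22 D_def del: One_nat_def)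

lemma lap_gen:
  assumes u: "u \<in> I"
    and h1: "\<And>t. t \<in> I \<Longrightarrow> pd 1 f (t,v) = \<phi> t"
    and h2: "\<And>t. pd 2 f (u,t) = \<psi> t"
    and d2: "(\<psi> has_real_derivative \<psi>') (at v)"
    and d1: "((\<lambda>t. s t / k t * \<phi> t) has_real_derivative \<Phi>') (at u)"
  shows "lap_II X f (u,v) = -(1/s u) * (\<Phi>' + s u / (p u * Q1 u) * \<psi>')"
proof -
  have A: "pd 1 (\<lambda>z. sqrt\<bar>det_sff X z\<bar> * (sff_inv X 1 1 z * pd 1 f z + sff_inv X 1 2 z * pd 2 f z)) (u,v) = \<Phi>'"
    apply (rule pd1_eq_r[OF openI, where g="\<lambda>t. s t / k t * \<phi> t"])
      apply (simp add: u)
     apply (simp add: detsff inv11 inv12 h1 s_def del: One_nat_def)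
    using d1 by simp
  have B: "pd 2 (\<lambda>z. sqrt\<bar>det_sff X z\<bar> * (sff_inv X 2 1 z * pd 1 f z + sff_inv X 2 2 z * pd 2 f z)) (u,v)
      = s u / (p u * Q1 u) * \<psi>'"
    apply (rule pd2_eq_r[where g="\<lambda>t. s u / (p u * Q1 u) * \<psi> t"])
     apply (simp add: detsff inv21 inv22 h2 s_def u del: One_nat_def)
    unfolding snd_conv by (rule DERIV_cmult[OF d2])
  show ?thesis
    unfolding lap_II_eq A B using u by (simp add: detsff s_def del: One_nat_def)
qed

lemma dk: "u \<in> I \<Longrightarrow> \<exists>d. (k has_real_derivative d) (at u)"
proof -
  assume u: "u \<in> I"
  have e: "k = (\<lambda>x. P1 x * Q2 x - P2 x * Q1 x)" by (simp add: fun_eq_iff k_def)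
  show ?thesis unfolding e
    using DERIV_diff[OF DERIV_mult[OF ddp[OF u] dddq[OF u]] DERIV_mult[OF dddp[OF u] ddq[OF u]]] by blast
qed

lemma dD: "u \<in> I \<Longrightarrow> \<exists>d. (D has_real_derivative d) (at u)"
proof -
  assume u: "u \<in> I"
  obtain d where d: "(k has_real_derivative d) (at u)" using dk[OF u] by blast
  have e: "D = (\<lambda>x. k x * (p x * Q1 x))" by (simp add: fun_eq_iff D_def)
  show ?thesis unfolding e
    using DERIV_mult[OF d DERIV_mult[OF dp[OF u] ddq[OF u]]] by blast
qed

lemma ds: "u \<in> I \<Longrightarrow> \<exists>d. (s has_real_derivative d) (at u)"
proof -
  assume u: "u \<in> I"
  obtain d where dd: "(D has_real_derivative d) (at u)" using dD[OF u] by blast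
  have e: "s = (\<lambda>x. sqrt (sqrt (D x * D x)))" by (simp add: fun_eq_iff s_def)
  have p1: "0 < D u * D u" using nz[OF u] by (simp add: zero_less_mult_iff linorder_neq_iff disj_commute)
  have p2: "0 < sqrt (D u * D u)" using p1 real_sqrt_gt_zero by blast
  show ?thesis unfolding e
    using DERIV_chain2[OF DERIV_real_sqrt[OF p2] DERIV_chain2[OF DERIV_real_sqrt[OF p1] DERIV_mult[OF dd dd]]]
    by blast
qed

definition "G1 t = s t / k t * P1 t"
definition "G3 t = s t / k t * Q1 t"

lemma dG1: "u \<in> I \<Longrightarrow> (G1 has_real_derivative deriv G1 u) (at u)"
proof -
  assume u: "u \<in> I"
  obtain d1 where d1: "(s has_real_derivative d1) (at u)" using ds[OF u] by blast
  obtain d2 where d2: "(k has_real_derivative d2) (at u)" using dk[OF u] by blast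
  have e: "G1 = (\<lambda>x. s x / k x * P1 x)" by (simp add: fun_eq_iff G1_def)
  have "\<exists>d. (G1 has_real_derivative d) (at u)" unfolding e
    using DERIV_mult[OF DERIV_divide[OF d1 d2] ddp[OF u]] nz'[OF u] by blast
  then show ?thesis using DERIV_imp_deriv by metis
qed

lemma dG3: "u \<in> I \<Longrightarrow> (G3 has_real_derivative deriv G3 u) (at u)"
proof -
  assume u: "u \<in> I"
  obtain d1 where d1: "(s has_real_derivative d1) (at u)" using ds[OF u] by blast
  obtain d2 where d2: "(k has_real_derivative d2) (at u)" using dk[OF u] by blast
  have e: "G3 = (\<lambda>x. s x / k x * Q1 x)" by (simp add: fun_eq_iff G3_def)
  have "\<exists>d. (G3 has_real_derivative d) (at u)" unfolding e
    using DERIV_mult[OF DERIV_divide[OF d1 d2] ddq[OF u]] nz'[OF u] by blast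
  then show ?thesis using DERIV_imp_deriv by metis
qed

definition "F u = -(1 / s u) * (deriv G1 u - s u / Q1 u)"

lemma lap1: assumes u: "u \<in> I" shows "lap_II X (\<lambda>z. X z $ 1) (u,v) = F u * cos v"
proof -
  have "lap_II X (\<lambda>z. X z $ 1) (u,v) = -(1/s u) * (deriv G1 u * cos v + s u / (p u * Q1 u) * (- p u * cos v))"
  proof (rule lap_gen[OF u])
    show "pd 1 (\<lambda>z. X z $ 1) (t,v) = P1 t * cos v" if t: "t \<in> I" for t
      apply (rule pd1_eq_r[OF openI, where g="\<lambda>t. p t * cos v"])
        apply (simp_all add: t X_eq)
      by (rule DERIV_cmult_right[OF dp[OF t]])
    show "pd 2 (\<lambda>z. X z $ 1) (u,t) = - p u * sin t" for t
      apply (rule pd2_eq_r[where g="\<lambda>t. p u * cos t"])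
       apply (simp_all add: X_eq)
      using DERIV_cmult[OF DERIV_cos, of "p u" t] by simp
    show "((\<lambda>t. - p u * sin t) has_real_derivative - p u * cos v) (at v)"
      using DERIV_cmult[OF DERIV_sin, of "- p u" v] by simp
    have "(\<lambda>t. s t / k t * (P1 t * cos v)) = (\<lambda>t. G1 t * cos v)" by (simp add: fun_eq_iff G1_def)
    then show "((\<lambda>t. s t / k t * (P1 t * cos v)) has_real_derivative deriv G1 u * cos v) (at u)"
      using DERIV_cmult_right[OF dG1[OF u]] by simp
  qed
  then show ?thesis using nz'[OF u] s_pos[OF u] by (simp add: F_def field_simps)
qed

lemma lap2: assumes u: "u \<in> I" shows "lap_II X (\<lambda>z. X z $ 2) (u,v) = F u * sin v"
proof -
  have "lap_II X (\<lambda>z. X z $ 2) (u,v) = -(1/s u) * (deriv G1 u * sin v + s u / (p u * Q1 u) * (- p u * sin v))"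
  proof (rule lap_gen[OF u])
    show "pd 1 (\<lambda>z. X z $ 2) (t,v) = P1 t * sin v" if t: "t \<in> I" for t
      apply (rule pd1_eq_r[OF openI, where g="\<lambda>t. p t * sin v"])
        apply (simp_all add: t X_eq)
      by (rule DERIV_cmult_right[OF dp[OF t]])
    show "pd 2 (\<lambda>z. X z $ 2) (u,t) = p u * cos t" for t
      apply (rule pd2_eq_r[where g="\<lambda>t. p u * sin t"])
       apply (simp_all add: X_eq)
      using DERIV_cmult[OF DERIV_sin, of "p u" t] by simp
    show "((\<lambda>t. p u * cos t) has_real_derivative - p u * sin v) (at v)"
      using DERIV_cmult[OF DERIV_cos, of "p u" v] by simp
    have "(\<lambda>t. s t / k t * (P1 t * sin v)) = (\<lambda>t. G1 t * sin v)" by (simp add: fun_eq_iff G1_def)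
    then show "((\<lambda>t. s t / k t * (P1 t * sin v)) has_real_derivative deriv G1 u * sin v) (at u)"
      using DERIV_cmult_right[OF dG1[OF u]] by simp
  qed
  then show ?thesis using nz'[OF u] s_pos[OF u] by (simp add: F_def field_simps)
qed

lemma lap3: assumes u: "u \<in> I" shows "lap_II X (\<lambda>z. X z $ 3) (u,v) = -(1/s u) * deriv G3 u"
proof -
  have "lap_II X (\<lambda>z. X z $ 3) (u,v) = -(1/s u) * (deriv G3 u + s u / (p u * Q1 u) * 0)"
  proof (rule lap_gen[OF u])
    show "pd 1 (\<lambda>z. X z $ 3) (t,v) = Q1 t" if t: "t \<in> I" for t
      apply (rule pd1_eq_r[OF openI, where g="q"])
        apply (simp_all add: t X_eq)
      by (rule dq[OF t])
    show "pd 2 (\<lambda>z. X z $ 3) (u,t) = 0" for t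
      apply (rule pd2_eq_r[where g="\<lambda>t. q u"])
       apply (simp_all add: X_eq)
      done
    show "((\<lambda>t. 0) has_real_derivative 0) (at v)" by simp
    have "(\<lambda>t. s t / k t * Q1 t) = G3" by (simp add: fun_eq_iff G3_def)
    then show "((\<lambda>t. s t / k t * Q1 t) has_real_derivative deriv G3 u) (at u)"
      using dG3[OF u] by simp
  qed
  then show ?thesis by simp
qed

lemma no_zero: assumes u: "u \<in> I" and g3: "deriv G3 u = 0" and f: "F u = 0" shows False
proof -
  have nzu: "k u \<noteq> 0" "p u \<noteq> 0" "Q1 u \<noteq> 0" using nz'[OF u] by auto
  have sp: "s u > 0" using s_pos[OF u] .
  have d1: "deriv G1 u = s u / Q1 u" using f sp by (simp add: F_def)
  have H: "((\<lambda>t. G3 t * (P1 t / Q1 t)) has_real_derivative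
      deriv G3 u * (P1 u / Q1 u) + ((P2 u * Q1 u - P1 u * Q2 u) / (Q1 u * Q1 u)) * G3 u) (at u)"
    using DERIV_mult[OF dG3[OF u] DERIV_divide[OF ddp[OF u] ddq[OF u] nzu(3)]] .
  have H2: "(G1 has_real_derivative
      deriv G3 u * (P1 u / Q1 u) + ((P2 u * Q1 u - P1 u * Q2 u) / (Q1 u * Q1 u)) * G3 u) (at u)"
    apply (rule has_field_derivative_transform_within_open[OF H openI u])
    using nz' by (auto simp: G1_def G3_def)
  have "deriv G1 u = deriv G3 u * (P1 u / Q1 u) + ((P2 u * Q1 u - P1 u * Q2 u) / (Q1 u * Q1 u)) * G3 u"
    using DERIV_unique[OF dG1[OF u] H2] .
  also have "\<dots> = - s u / Q1 u"
    using nzu by (simp add: g3 G3_def k_def field_simps)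
  finally have "s u / Q1 u = - s u / Q1 u" using d1 by simp
  then show False using sp nzu by (simp add: field_simps)
qed

end

lemma q_nonzero: assumes "\<forall>t\<in>I. q t = 0" "u \<in> I" "D u \<noteq> 0" shows False
proof -
  have "(q has_real_derivative 0) (at u)"
    by (rule has_field_derivative_transform_within_open[OF DERIV_const openI assms(2)]) (use assms(1) in auto)
  then have "Q1 u = 0" using DERIV_unique[OF dq[OF assms(2)]] by blast
  then show False using assms(3) by (simp add: D_def)
qed

end

lemma smooth_derivs:
  assumes "smooth_on_interval f S" "t \<in> S"
  shows "(f has_real_derivative deriv f t) (at t)"
    "(deriv f has_real_derivative deriv (deriv f) t) (at t)"
    "(deriv (deriv f) has_real_derivative deriv (deriv (deriv f)) t) (at t)"
proof -
  have "((deriv ^^ 0) f) differentiable (at t)" "((deriv ^^ 1) f) differentiable (at t)"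
    "((deriv ^^ 2) f) differentiable (at t)"
    using assms unfolding smooth_on_interval_def by blast+
  then show "(f has_real_derivative deriv f t) (at t)"
    "(deriv f has_real_derivative deriv (deriv f) t) (at t)"
    "(deriv (deriv f) has_real_derivative deriv (deriv (deriv f)) t) (at t)"
    by (simp_all add: DERIV_deriv_iff_real_differentiable numeral_2_eq_2)
qed

theorem mainTheorem2:
  fixes p q :: "real \<Rightarrow> real" and a b :: real and A :: "real^3^3"
  assumes "a < b"
    and "smooth_on_interval p {a<..<b}" and "smooth_on_interval q {a<..<b}"
    and "\<forall>u\<in>{a<..<b}. p u > 0"
    and "\<forall>u\<in>{a<..<b}. (deriv p u)\<^sup>2 + (deriv q u)\<^sup>2 = 1"
    and "\<forall>u\<in>{a<..<b}. \<forall>v\<in>{0..<2*pi}. gauss_curvature (surf_rev p q) (u, v) \<noteq> 0"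
    and "\<forall>u\<in>{a<..<b}. \<forall>v\<in>{0..<2*pi}.
           lap_II_vec (surf_rev p q) (u, v) = A *v surf_rev p q (u, v)"
  shows "\<exists>lam mu. A = (\<chi> i j. if i = j then (if i = 3 then mu else lam) else 0)
               \<and> (lam \<noteq> 0 \<or> mu \<noteq> 0)"
proof -
  let ?I = "{a<..<b}"
  interpret R: rev p q ?I
    apply unfold_locales
    using smooth_derivs[OF assms(2)] smooth_derivs[OF assms(3)] assms(4,5) by auto
  have nz: "\<And>t. t \<in> ?I \<Longrightarrow> R.D t \<noteq> 0"
  proof -
    fix t assume t: "t \<in> ?I"
    have "gauss_curvature (surf_rev p q) (t, 0) \<noteq> 0" using assms(6) t by simp
    then have "det_sff (surf_rev p q) (t, 0) \<noteq> 0" by (auto simp: gauss_curvature_def)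
    then show "R.D t \<noteq> 0" using R.detsff[OF t] by simp
  qed
  have E: "R.F u * cos v = A$1$1 * (p u * cos v) + A$1$2 * (p u * sin v) + A$1$3 * q u
         \<and> R.F u * sin v = A$2$1 * (p u * cos v) + A$2$2 * (p u * sin v) + A$2$3 * q u
         \<and> -(1 / R.s u) * deriv R.G3 u = A$3$1 * (p u * cos v) + A$3$2 * (p u * sin v) + A$3$3 * q u"
    if u: "u \<in> ?I" and v: "v \<in> {0..<2*pi}" for u v
  proof -
    have h: "lap_II_vec (surf_rev p q) (u, v) = A *v surf_rev p q (u, v)" using assms(7) u v by blast
    have c: "lap_II_vec (surf_rev p q) (u, v) = vector [R.F u * cos v, R.F u * sin v, -(1 / R.s u) * deriv R.G3 u]"
      using R.lap1[OF nz u, of v] R.lap2[OF nz u, of v] R.lap3[OF nz u, of v]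
      by (simp add: vec_eq_iff forall_3 lap_II_vec_def del: One_nat_def)
    have "(A *v surf_rev p q (u, v)) = vector [A$1$1 * (p u * cos v) + A$1$2 * (p u * sin v) + A$1$3 * q u,
        A$2$1 * (p u * cos v) + A$2$2 * (p u * sin v) + A$2$3 * q u,
        A$3$1 * (p u * cos v) + A$3$2 * (p u * sin v) + A$3$3 * q u]"
      by (simp add: vec_eq_iff forall_3 matrix_vector_mult_def sum_3 R.X_eq)
    then have "vector [R.F u * cos v, R.F u * sin v, -(1 / R.s u) * deriv R.G3 u] = (vector [A$1$1 * (p u * cos v) + A$1$2 * (p u * sin v) + A$1$3 * q u,
        A$2$1 * (p u * cos v) + A$2$2 * (p u * sin v) + A$2$3 * q u,
        A$3$1 * (p u * cos v) + A$3$2 * (p u * sin v) + A$3$3 * q u] :: real^3)"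
      using h c by simp
    then show ?thesis by (simp only: vec_eq_iff forall_3 vector_3)
  qed
  have v0: "0 \<in> {0..<2*pi}" and v1: "pi/2 \<in> {0..<2*pi}" and v2: "pi \<in> {0..<2*pi}"
    using pi_gt_zero by auto
  have row: "A$1$3 * q u = 0 \<and> A$2$3 * q u = 0 \<and> A$2$1 = 0 \<and> A$3$1 = 0 \<and> A$3$2 = 0
      \<and> A$1$2 * p u = - A$1$3 * q u \<and> A$1$1 * p u + A$1$3 * q u = A$2$2 * p u + A$2$3 * q u
      \<and> R.F u = A$1$1 * p u + A$1$3 * q u \<and> -(1 / R.s u) * deriv R.G3 u = A$3$3 * q u"
    if u: "u \<in> ?I" for u
  proof -
    have pu: "p u > 0" using assms(4) u by blast
    note e0 = E[OF u v0] and e1 = E[OF u v1] and e2 = E[OF u v2]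
    have e0': "R.F u = A$1$1 * p u + A$1$3 * q u" "0 = A$2$1 * p u + A$2$3 * q u"
       "-(1 / R.s u) * deriv R.G3 u = A$3$1 * p u + A$3$3 * q u"
      using e0 by simp_all
    have e1': "0 = A$1$2 * p u + A$1$3 * q u" "R.F u = A$2$2 * p u + A$2$3 * q u"
       "-(1 / R.s u) * deriv R.G3 u = A$3$2 * p u + A$3$3 * q u"
      using e1 by simp_all
    have e2': "- R.F u = - A$1$1 * p u + A$1$3 * q u" "0 = - A$2$1 * p u + A$2$3 * q u"
       "-(1 / R.s u) * deriv R.G3 u = - A$3$1 * p u + A$3$3 * q u"
      using e2 by simp_all
    have a21: "A$2$1 * p u = 0" using e0'(2) e2'(2) by linarith
    have a31: "A$3$1 * p u = 0" using e0'(3) e2'(3) by linarith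
    have a32: "A$3$2 * p u = 0" using e0'(3) e1'(3) a31 by linarith
    have a13q: "A$1$3 * q u = 0" using e0'(1) e2'(1) by linarith
    have a23q: "A$2$3 * q u = 0" using e0'(2) e2'(2) by linarith
    show ?thesis using e0' e1' e2' a21 a31 a32 a13q a23q pu by auto
  qed
  define u0 where "u0 = (a + b) / 2"
  have u0: "u0 \<in> ?I" using assms(1) by (simp add: u0_def)
  have pu0: "p u0 > 0" using assms(4) u0 by blast
  have a13: "A$1$3 = 0"
  proof (rule ccontr)
    assume "A$1$3 \<noteq> 0"
    then have "\<forall>t\<in>?I. q t = 0" using row by auto
    then show False using R.q_nonzero u0 nz by blast
  qed
  have a23: "A$2$3 = 0"
  proof (rule ccontr)
    assume "A$2$3 \<noteq> 0"
    then have "\<forall>t\<in>?I. q t = 0" using row by auto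
    then show False using R.q_nonzero u0 nz by blast
  qed
  note r = row[OF u0]
  have a12: "A$1$2 = 0" using r a13 pu0 by simp
  have a11: "A$1$1 = A$2$2" using r a13 a23 pu0 by simp
  have AA: "A = (\<chi> i j. if i = j then (if i = 3 then A$3$3 else A$1$1) else 0)"
    using r a12 a13 a23 a11 by (simp add: vec_eq_iff forall_3)
  have "A$1$1 \<noteq> 0 \<or> A$3$3 \<noteq> 0"
  proof (rule ccontr)
    assume "\<not> (A$1$1 \<noteq> 0 \<or> A$3$3 \<noteq> 0)"
    then have z: "A$1$1 = 0" "A$3$3 = 0" by auto
    have sp: "R.s u0 > 0" using R.s_pos[OF nz u0] .
    have "R.F u0 = 0" using r z a13 by simp
    moreover have "deriv R.G3 u0 = 0" using r z sp by simp
    ultimately show False using R.no_zero[OF nz u0] by blast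
  qed
  then show ?thesis using AA by blast
qed

end
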